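(* Let $X$ be an exponential vector space over a field $K$. Then: (i) for all $x\in X\smallsetminus X_0$, $x\in L(x)$ and $\uparrow L(x)=L(x)$; (ii) if $x,y\in X\smallsetminus X_0$ and $x\leq y$, then $L(x)\supseteq L(y)$; (iii) if $x=\alpha y+p$ for some $\alpha\in K\smallsetminus\{0\}$, $p\in X_0$ and $y\in X\smallsetminus X_0$, then $L(x)=L(y)$; (iv) $L(x)\cap X_0=\emptyset$ for all $x\in X\smallsetminus X_0$; (v) if $a\in L(b)$ (with $b\in X\smallsetminus X_0$) then $L(a)\subseteq L(b)$; (vi) for any $x,y\in X\smallsetminus X_0$, $L(x)\cap L(y)\neq\emptyset$.
   Context: An exponential vector space (evs) over a field $K$ is a partially ordered set $(X,\leq)$ with a binary operation $+$ on $X$ and a map $K\times X\to X$, $(\alpha,x)\mapsto \alpha x$, such that: (A1) $(X,+)$ is a commutative semigroup with identity $\theta$; (A2) $x\leq y$ implies $x+z\leq y+z$ and $\alpha x\leq \alpha y$ for all $z\in X$, $\alpha\in K$; (A3) $\alpha(x+y)=\alpha x+\alpha y$, $\alpha(\beta x)=(\alpha\beta)x$, $(\alpha+\beta)x\leq \alpha x+\beta x$, $1x=x$; (A4) $\alpha x=\theta$ iff $\alpha=0$ or $x=\theta$; (A5) $x+(-1)x=\theta$ iff $x\in X_0$, where $X_0:=\{z\in X: y\not\leq z \text{ for all } y\in X\smallsetminus\{z\}\}$ (the set of minimal elements, called the primitive space; it is a vector space over $K$); (A6) for each $x\in X$ there is $p\in X_0$ with $p\leq x$. For $x\in X\smallsetminus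 X_0$ let $L(x):=\{z\in X: z\geq \alpha x+p \text{ for some } \alpha\in K\smallsetminus\{0\},\ p\in X_0\}$. For a subset $S\subseteq X$, $\uparrow S:=\{z\in X: z\geq s \text{ for some } s\in S\}$. *)

theory Defs
  imports Main
begin

definition primitive :: "('x \<Rightarrow> 'x \<Rightarrow> bool) \<Rightarrow> 'x set" where
  "primitive le = {z. \<forall>y. y \<noteq> z \<longrightarrow> \<not> le y z}"

definition evs :: "('x \<Rightarrow> 'x \<Rightarrow> bool) \<Rightarrow> ('x \<Rightarrow> 'x \<Rightarrow> 'x) \<Rightarrow> 'x
    \<Rightarrow> ('k::field \<Rightarrow> 'x \<Rightarrow> 'x) \<Rightarrow> bool" where
  "evs le add theta smult \<longleftrightarrow>
     \<comment> \<open>partial order\<close>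
     (\<forall>x. le x x) \<and> (\<forall>x y. le x y \<and> le y x \<longrightarrow> x = y) \<and>
     (\<forall>x y z. le x y \<and> le y z \<longrightarrow> le x z) \<and>
     \<comment> \<open>(A1)\<close>
     (\<forall>x y z. add (add x y) z = add x (add y z)) \<and>
     (\<forall>x y. add x y = add y x) \<and> (\<forall>x. add x theta = x) \<and>
     \<comment> \<open>(A2)\<close>
     (\<forall>x y z. le x y \<longrightarrow> le (add x z) (add y z)) \<and>
     (\<forall>x y a. le x y \<longrightarrow> le (smult a x) (smult a y)) \<and>
     \<comment> \<open>(A3)\<close>
     (\<forall>a x y. smult a (add x y) = add (smult a x) (smult a y)) \<and>
     (\<forall>a b x. smult a (smult b x) = smult (a * b) x) \<and>
     (\<forall>a b x. le (smult (a + b) x) (add (smult a x) (smult b x))) \<and>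
     (\<forall>x. smult 1 x = x) \<and>
     \<comment> \<open>(A4)\<close>
     (\<forall>a x. smult a x = theta \<longleftrightarrow> a = 0 \<or> x = theta) \<and>
     \<comment> \<open>(A5)\<close>
     (\<forall>x. add x (smult (-1) x) = theta \<longleftrightarrow> x \<in> primitive le) \<and>
     \<comment> \<open>(A6)\<close>
     (\<forall>x. \<exists>p \<in> primitive le. le p x)"

definition Lset :: "('x \<Rightarrow> 'x \<Rightarrow> bool) \<Rightarrow> ('x \<Rightarrow> 'x \<Rightarrow> 'x)
    \<Rightarrow> ('k::field \<Rightarrow> 'x \<Rightarrow> 'x) \<Rightarrow> 'x \<Rightarrow> 'x set" where
  "Lset le add smult x =
     {z. \<exists>a p. a \<noteq> (0::'k) \<and> p \<in> primitive le \<and> le (add (smult a x) p) z}"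

definition upset :: "('x \<Rightarrow> 'x \<Rightarrow> bool) \<Rightarrow> 'x set \<Rightarrow> 'x set" where
  "upset le S = {z. \<exists>s\<in>S. le s z}"

end

theory Submission
  imports Defs
begin

theorem mainTheorem15:
  fixes le :: "'x \<Rightarrow> 'x \<Rightarrow> bool" and add :: "'x \<Rightarrow> 'x \<Rightarrow> 'x" and theta :: 'x
    and smult :: "'k::field \<Rightarrow> 'x \<Rightarrow> 'x"
  assumes "evs le add theta smult"
  shows
   "(\<forall>x. x \<notin> primitive le \<longrightarrow>
        x \<in> Lset le add smult x \<and> upset le (Lset le add smult x) = Lset le add smult x)
    \<and> (\<forall>x y. x \<notin> primitive le \<and> y \<notin> primitive le \<and> le x y \<longrightarrow>
        Lset le add smult y \<subseteq> Lset le add smult x)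
    \<and> (\<forall>x y a p. a \<noteq> 0 \<and> p \<in> primitive le \<and> y \<notin> primitive le \<and> x = add (smult a y) p \<longrightarrow>
        Lset le add smult x = Lset le add smult y)
    \<and> (\<forall>x. x \<notin> primitive le \<longrightarrow> Lset le add smult x \<inter> primitive le = {})
    \<and> (\<forall>a b. b \<notin> primitive le \<and> a \<in> Lset le add smult b \<longrightarrow>
        Lset le add smult a \<subseteq> Lset le add smult b)
    \<and> (\<forall>x y. x \<notin> primitive le \<and> y \<notin> primitive le \<longrightarrow>
        Lset le add smult x \<inter> Lset le add smult y \<noteq> {})"
proof -
  let ?P = "primitive le"
  let ?L = "Lset le add smult"
  note E = assms[unfolded evs_def]
  have refl: "\<And>x. le x x"
    using E[THEN conjunct1] by blast
  have trans: "\<And>x y z. le x y \<Longrightarrow> le y z \<Longrightarrow> le x z"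
    using E[THEN conjunct2, THEN conjunct2, THEN conjunct1] by blast
  have assoc: "\<And>x y z. add (add x y) z = add x (add y z)"
    using E[THEN conjunct2, THEN conjunct2, THEN conjunct2, THEN conjunct1] by blast
  have comm: "\<And>x y. add x y = add y x"
    using E[THEN conjunct2, THEN conjunct2, THEN conjunct2, THEN conjunct2, THEN conjunct1] by blast
  have zero: "\<And>x. add x theta = x"
    using E[THEN conjunct2, THEN conjunct2, THEN conjunct2, THEN conjunct2, THEN conjunct2, THEN conjunct1] by blast
  have amono: "\<And>x y z. le x y \<Longrightarrow> le (add x z) (add y z)"
    using E[THEN conjunct2, THEN conjunct2, THEN conjunct2, THEN conjunct2, THEN conjunct2, THEN conjunct2, THEN conjunct1] by blast
  have smono: "\<And>x y a. le x y \<Longrightarrow> le (smult a x) (smult a y)"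
    using E[THEN conjunct2, THEN conjunct2, THEN conjunct2, THEN conjunct2, THEN conjunct2, THEN conjunct2, THEN conjunct2, THEN conjunct1] by blast
  have sdist: "\<And>a x y. smult a (add x y) = add (smult a x) (smult a y)"
    using E[THEN conjunct2, THEN conjunct2, THEN conjunct2, THEN conjunct2, THEN conjunct2, THEN conjunct2, THEN conjunct2, THEN conjunct2, THEN conjunct1] by blast
  have sass: "\<And>a b x. smult a (smult b x) = smult (a * b) x"
    using E[THEN conjunct2, THEN conjunct2, THEN conjunct2, THEN conjunct2, THEN conjunct2, THEN conjunct2, THEN conjunct2, THEN conjunct2, THEN conjunct2, THEN conjunct1] by blast
  have one: "\<And>x. smult 1 x = x"
    using E[THEN conjunct2, THEN conjunct2, THEN conjunct2, THEN conjunct2, THEN conjunct2, THEN conjunct2, THEN conjunct2, THEN conjunct2, THEN conjunct2, THEN conjunct2, THEN conjunct2, THEN conjunct1] by blast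
  have A4: "\<And>a x. smult a x = theta \<longleftrightarrow> a = 0 \<or> x = theta"
    using E[THEN conjunct2, THEN conjunct2, THEN conjunct2, THEN conjunct2, THEN conjunct2, THEN conjunct2, THEN conjunct2, THEN conjunct2, THEN conjunct2, THEN conjunct2, THEN conjunct2, THEN conjunct2, THEN conjunct1] by blast
  have A5: "\<And>x. add x (smult (-1) x) = theta \<longleftrightarrow> x \<in> ?P"
    using E[THEN conjunct2, THEN conjunct2, THEN conjunct2, THEN conjunct2, THEN conjunct2, THEN conjunct2, THEN conjunct2, THEN conjunct2, THEN conjunct2, THEN conjunct2, THEN conjunct2, THEN conjunct2, THEN conjunct2, THEN conjunct1] by blast
  have A6: "\<And>x. \<exists>p \<in> ?P. le p x"
    using E[THEN conjunct2, THEN conjunct2, THEN conjunct2, THEN conjunct2, THEN conjunct2, THEN conjunct2, THEN conjunct2, THEN conjunct2, THEN conjunct2, THEN conjunct2, THEN conjunct2, THEN conjunct2, THEN conjunct2, THEN conjunct2] by blast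
  have minl: "\<And>y z. z \<in> ?P \<Longrightarrow> le y z \<Longrightarrow> y = z"
    unfolding primitive_def by blast
  have thP: "theta \<in> ?P"
    using A5[of theta] A4[of "-1" theta] zero by simp
  have lcomm: "\<And>x y z. add x (add y z) = add y (add x z)"
  proof -
    fix x y z
    have "add x (add y z) = add (add x y) z" by (simp add: assoc)
    also have "\<dots> = add (add y x) z" by (simp add: comm)
    finally show "add x (add y z) = add y (add x z)" by (simp add: assoc)
  qed
  have smP: "smult a p \<in> ?P" if "p \<in> ?P" for a p
  proof -
    have "smult (-1) (smult a p) = smult a (smult (-1) p)"
      using sass by (simp add: mult.commute)
    hence "add (smult a p) (smult (-1) (smult a p)) = smult a (add p (smult (-1) p))"
      using sdist by simp
    also have "\<dots> = theta" using that A5 A4 by simp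
    finally show ?thesis using A5 by blast
  qed
  have adP: "add p q \<in> ?P" if "p \<in> ?P" "q \<in> ?P" for p q
  proof -
    have "add (add p q) (smult (-1) (add p q))
        = add (add p (smult (-1) p)) (add q (smult (-1) q))"
      by (simp add: sdist assoc comm lcomm)
    also have "\<dots> = theta"
    proof -
      have "add p (smult (-1) p) = theta" "add q (smult (-1) q) = theta" using A5 that by blast+
      thus ?thesis using zero by simp
    qed
    finally show ?thesis using A5 by blast
  qed
  have amono2: "\<And>x y z. le x y \<Longrightarrow> le (add z x) (add z y)"
    using amono comm by simp
  have cancel: "add (add x p) (smult (-1) p) = x" if "p \<in> ?P" for x p
  proof -
    have "add p (smult (-1) p) = theta" using A5 that by blast
    thus ?thesis by (simp add: assoc zero)
  qed
  have Lmem: "z \<in> ?L x \<longleftrightarrow> (\<exists>a p. a \<noteq> 0 \<and> p \<in> ?P \<and> le (add (smult a x) p) z)" for z x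
    unfolding Lset_def by simp
  have LI: "z \<in> ?L x" if "a \<noteq> 0" "p \<in> ?P" "le (add (smult a x) p) z" for z x a p
    using that unfolding Lset_def by blast
  have LE: "\<exists>a p. a \<noteq> 0 \<and> p \<in> ?P \<and> le (add (smult a x) p) z" if "z \<in> ?L x" for z x
    using that unfolding Lset_def by simp
  have sub: "?L a \<subseteq> ?L b" if ab: "a \<in> ?L b" for a b
  proof
    fix z assume "z \<in> ?L a"
    then obtain c q where c: "c \<noteq> 0" "q \<in> ?P" "le (add (smult c a) q) z" using LE by blast
    obtain d p where d: "d \<noteq> 0" "p \<in> ?P" "le (add (smult d b) p) a" using LE[OF ab] by blast
    have "le (smult c (add (smult d b) p)) (smult c a)" using smono[OF d(3)] .
    hence "le (add (smult c (add (smult d b) p)) q) (add (smult c a) q)"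
      using amono by blast
    also have "add (smult c (add (smult d b) p)) q = add (smult (c*d) b) (add (smult c p) q)"
      by (simp add: sdist sass assoc)
    finally have "le (add (smult (c*d) b) (add (smult c p) q)) z" using c(3) trans by blast
    moreover have "add (smult c p) q \<in> ?P" using adP[OF smP[OF d(2)] c(2)] .
    moreover have "c * d \<noteq> 0" using c(1) d(1) by simp
    ultimately show "z \<in> ?L b" using LI by blast
  qed
  have self: "x \<in> ?L x" for x
  proof -
    have "le (add (smult 1 x) theta) x" using one zero refl by simp
    thus ?thesis using LI[OF one_neq_zero thP] by blast
  qed
  have p1: "upset le (?L x) = ?L x" for x
  proof
    show "upset le (?L x) \<subseteq> ?L x"
    proof
      fix z assume "z \<in> upset le (?L x)"
      then obtain s where s: "s \<in> ?L x" "le s z" unfolding upset_def by blast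
      obtain a p where "a \<noteq> 0" "p \<in> ?P" "le (add (smult a x) p) s" using LE[OF s(1)] by blast
      thus "z \<in> ?L x" using LI trans s(2) by blast
    qed
    show "?L x \<subseteq> upset le (?L x)" unfolding upset_def using refl by blast
  qed
  have p2: "?L y \<subseteq> ?L x" if "le x y" for x y
  proof
    fix z assume "z \<in> ?L y"
    then obtain c q where c: "c \<noteq> 0" "q \<in> ?P" "le (add (smult c y) q) z" using LE by blast
    have "le (add (smult c x) q) (add (smult c y) q)" using that smono amono by blast
    hence "le (add (smult c x) q) z" using c(3) trans by blast
    thus "z \<in> ?L x" using LI c by blast
  qed
  have p3: "?L x = ?L y" if "a \<noteq> 0" "p \<in> ?P" "x = add (smult a y) p" for x y a p
  proof
    have "x \<in> ?L y" using LI[OF that(1,2), of y x] refl that(3) by blast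
    thus "?L x \<subseteq> ?L y" using sub by blast
    have "smult (inverse a) x = add y (smult (inverse a) p)"
      using that sdist sass one by (simp)
    hence "add (smult (inverse a) x) (smult (-1) (smult (inverse a) p)) = y"
      using cancel[of "smult (inverse a) p" y] smP[OF that(2)] by simp
    moreover have "smult (-1) (smult (inverse a) p) \<in> ?P" using smP that(2) by blast
    moreover have "inverse a \<noteq> 0" using that(1) by simp
    ultimately have "y \<in> ?L x" using LI refl by blast
    thus "?L y \<subseteq> ?L x" using sub by blast
  qed
  have p4: "?L x \<inter> ?P = {}" if "x \<notin> ?P" for x
  proof (rule ccontr)
    assume "?L x \<inter> ?P \<noteq> {}"
    then obtain z where z: "z \<in> ?L x" "z \<in> ?P" by blast
    then obtain a p where a: "a \<noteq> 0" "p \<in> ?P" "le (add (smult a x) p) z" using LE by blast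
    hence eq: "add (smult a x) p = z" using minl z by blast
    have "smult a x = add z (smult (-1) p)" using cancel[OF a(2), of "smult a x"] eq by simp
    hence "smult a x \<in> ?P" using adP[OF z(2) smP[OF a(2)]] by simp
    hence "smult (inverse a) (smult a x) \<in> ?P" using smP by blast
    thus False using sass one a(1) that by simp
  qed
  have p6: "?L x \<inter> ?L y \<noteq> {}" for x y
  proof -
    obtain p where p: "p \<in> ?P" "le p y" using A6 by blast
    obtain q where q: "q \<in> ?P" "le q x" using A6 by blast
    have "le (add (smult 1 x) p) (add x y)" using amono2[OF p(2)] one by simp
    hence "add x y \<in> ?L x" using LI[OF one_neq_zero p(1)] by blast
    moreover have "le (add (smult 1 y) q) (add x y)" using amono2[OF q(2), of y] one comm by simp
    hence "add x y \<in> ?L y" using LI[OF one_neq_zero q(1)] by blast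
    ultimately show ?thesis by blast
  qed
  show ?thesis
    apply (intro conjI allI impI)
    using self p1 p2 p3 p4 sub p6 by simp_all
qed

end
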